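(* Let $\mathcal{M}=(E,\rho)$ be a $q$-matroid and $V$ a subspace of $E$. Then $V$ is independent if and only if $\dim(V\cap Z)\le\rho(Z)$ for all $Z\in\mathcal{Z}(\mathcal{M})$. Consequently, the cyclic flats of $\mathcal{M}$ together with their rank values determine the collection of independent spaces and hence the $q$-matroid $\mathcal{M}$.
   Context: Let $\mathbb{F}=\mathbb{F}_q$, $E$ a finite-dimensional $\mathbb{F}$-vector space. A $q$-matroid is $\mathcal{M}=(E,\rho)$ with $\rho$ from subspaces of $E$ to $\mathbb{Z}_{\ge0}$ satisfying $0\le\rho(V)\le\dim V$, monotonicity, and submodularity $\rho(V+W)+\rho(V\cap W)\le\rho(V)+\rho(W)$. $V$ is independent if $\rho(V)=\dim V$. A flat is $F$ with $\rho(F+\langle x\rangle)>\rho(F)$ for all $x\in E\setminus F$. The cyclic core is $\mathrm{cyc}(V)=\{x\in V\mid\rho(W)=\rho(V)\text{ for all }W\le V\text{ with }W+\langle x\rangle=V\}$; $V$ is cyclic if $\mathrm{cyc}(V)=V$. $\mathcal{Z}(\mathcal{M})$ is the set of cyclic flats (subspaces that are both flats and cyclic). *)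

theory Defs
  imports Complex_Main
begin

text \<open>The ambient space E is the whole carrier type 'v, a finite-dimensional vector
space over the finite field 'f (i.e. F_q) with scalar multiplication scale.
A rank function is a map from sets of vectors to nat; only its values on subspaces matter.\<close>

definition q_matroid :: "('f::{finite,field} \<Rightarrow> 'v::ab_group_add \<Rightarrow> 'v) \<Rightarrow> ('v set \<Rightarrow> nat) \<Rightarrow> bool" where
  "q_matroid scale \<rho> \<longleftrightarrow>
     (\<exists>B. finite_dimensional_vector_space scale B) \<and>
     (\<forall>V. module.subspace scale V \<longrightarrow> \<rho> V \<le> vector_space.dim scale V) \<and>
     (\<forall>V W. module.subspace scale V \<and> module.subspace scale W \<and> V \<subseteq> W \<longrightarrow> \<rho> V \<le> \<rho> W) \<and>
     (\<forall>V W. module.subspace scale V \<and> module.subspace scale W \<longrightarrow>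
        \<rho> (module.span scale (V \<union> W)) + \<rho> (V \<inter> W) \<le> \<rho> V + \<rho> W)"

definition q_indep :: "('f::field \<Rightarrow> 'v::ab_group_add \<Rightarrow> 'v) \<Rightarrow> ('v set \<Rightarrow> nat) \<Rightarrow> 'v set \<Rightarrow> bool" where
  "q_indep scale \<rho> V \<longleftrightarrow> \<rho> V = vector_space.dim scale V"

definition q_flat :: "('f::field \<Rightarrow> 'v::ab_group_add \<Rightarrow> 'v) \<Rightarrow> ('v set \<Rightarrow> nat) \<Rightarrow> 'v set \<Rightarrow> bool" where
  "q_flat scale \<rho> F \<longleftrightarrow> module.subspace scale F \<and>
     (\<forall>x. x \<notin> F \<longrightarrow> \<rho> (module.span scale (F \<union> module.span scale {x})) > \<rho> F)"

definition q_cyc :: "('f::field \<Rightarrow> 'v::ab_group_add \<Rightarrow> 'v) \<Rightarrow> ('v set \<Rightarrow> nat) \<Rightarrow> 'v set \<Rightarrow> 'v set" where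
  "q_cyc scale \<rho> V = {x \<in> V. \<forall>W. module.subspace scale W \<and> W \<subseteq> V \<and>
       module.span scale (W \<union> module.span scale {x}) = V \<longrightarrow> \<rho> W = \<rho> V}"

definition q_cyclic :: "('f::field \<Rightarrow> 'v::ab_group_add \<Rightarrow> 'v) \<Rightarrow> ('v set \<Rightarrow> nat) \<Rightarrow> 'v set \<Rightarrow> bool" where
  "q_cyclic scale \<rho> V \<longleftrightarrow> q_cyc scale \<rho> V = V"

definition cyclic_flats :: "('f::field \<Rightarrow> 'v::ab_group_add \<Rightarrow> 'v) \<Rightarrow> ('v set \<Rightarrow> nat) \<Rightarrow> 'v set set" where
  "cyclic_flats scale \<rho> = {Z. q_flat scale \<rho> Z \<and> q_cyclic scale \<rho> Z}"

end

theory Submission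
  imports Defs
begin

locale qmat = finite_dimensional_vector_space scale Basis
  for scale :: "'f::field \<Rightarrow> 'v::ab_group_add \<Rightarrow> 'v" and Basis :: "'v set" +
  fixes \<rho> :: "'v set \<Rightarrow> nat"
  assumes r_dim: "subspace V \<Longrightarrow> \<rho> V \<le> dim V"
  and r_mono: "subspace V \<Longrightarrow> subspace W \<Longrightarrow> V \<subseteq> W \<Longrightarrow> \<rho> V \<le> \<rho> W"
  and r_sub: "subspace V \<Longrightarrow> subspace W \<Longrightarrow> \<rho> (span (V \<union> W)) + \<rho> (V \<inter> W) \<le> \<rho> V + \<rho> W"
begin

lemma span_Un_span: "span (A \<union> span B) = span (A \<union> B)"
  unfolding span_eq
  by (meson Un_mono Un_least order_refl span_mono span_superset subset_trans sup.cobounded1 sup.cobounded2)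

lemma dim_sum: "subspace S \<Longrightarrow> subspace T \<Longrightarrow> dim (span (S \<union> T)) + dim (S \<inter> T) = dim S + dim T"
proof -
  assume a: "subspace S" "subspace T"
  hence hS: "span S = S" and hT: "span T = T" by simp_all
  have e: "span (S \<union> T) = {x + y |x y. x \<in> S \<and> y \<in> T}" using span_Un[of S T] unfolding hS hT .
  show ?thesis using dim_sums_Int[OF a] unfolding e .
qed

lemma dim_add1: "subspace A \<Longrightarrow> x \<notin> A \<Longrightarrow> dim (span (A \<union> span {x})) = dim A + 1"
proof -
  assume a: "subspace A" "x \<notin> A"
  have "span (A \<union> span {x}) = span (insert x A)" using span_Un_span[of A "{x}"] by simp
  moreover have "x \<notin> span A" using a by (metis span_eq_iff)
  ultimately show ?thesis using a dim_insert[of x A] by simp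
qed

lemma unit: "subspace A \<Longrightarrow> \<rho> (span (A \<union> span {x})) \<le> \<rho> A + 1"
proof -
  assume a: "subspace A"
  have "\<rho> (span {x}) \<le> dim (span {x})" by (rule r_dim) simp
  also have "\<dots> \<le> 1" by simp
  finally show ?thesis using r_sub[OF a, of "span {x}"] by simp
qed

lemma L: "subspace W \<Longrightarrow> subspace V \<Longrightarrow> W \<subseteq> V \<Longrightarrow> \<rho> V + dim W \<le> \<rho> W + dim V"
proof (induction "dim V - dim W" arbitrary: W rule: less_induct)
  case less
  show ?case
  proof (cases "W = V")
    case True thus ?thesis by simp
  next
    case False
    then obtain x where x: "x \<in> V" "x \<notin> W" using less.prems by blast
    define W' where "W' = span (W \<union> span {x})"
    have sW': "subspace W'" unfolding W'_def by simp
    have W'V: "W' \<subseteq> V" unfolding W'_def using less.prems x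
      by (metis Un_least empty_subsetI insert_subset span_minimal)
    have d: "dim W' = dim W + 1" unfolding W'_def using dim_add1 less.prems x by simp
    have "dim W' \<le> dim V" using W'V dim_subset by simp
    hence "dim V - dim W' < dim V - dim W" using d by simp
    from less.hyps[OF this sW' less.prems(2) W'V]
    have "\<rho> V + dim W' \<le> \<rho> W' + dim V" .
    moreover have "\<rho> W' \<le> \<rho> W + 1" unfolding W'_def using unit less.prems by simp
    ultimately show ?thesis using d by simp
  qed
qed

lemma closure_fin: assumes sA: "subspace A" shows "finite S \<Longrightarrow> (\<forall>x\<in>S. \<rho> (span (A \<union> span {x})) = \<rho> A) \<Longrightarrow> \<rho> (span (A \<union> S)) = \<rho> A"
proof (induction S rule: finite_induct)
  case empty thus ?case using sA by (metis span_eq_iff sup_bot.right_neutral)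
next
  case (insert x S)
  define P where "P = span (A \<union> span {x})"
  define Q where "Q = span (A \<union> S)"
  have sP: "subspace P" "subspace Q" unfolding P_def Q_def by simp_all
  have rP: "\<rho> P = \<rho> A" "\<rho> Q = \<rho> A" unfolding P_def Q_def using insert by simp_all
  have APQ: "A \<subseteq> P \<inter> Q" unfolding P_def Q_def using span_superset by blast
  have "\<rho> A \<le> \<rho> (P \<inter> Q)" using r_mono[OF sA _ APQ] sP subspace_inter by blast
  moreover have "\<rho> (span (P \<union> Q)) + \<rho> (P \<inter> Q) \<le> \<rho> P + \<rho> Q" using r_sub sP by blast
  moreover have e: "span (P \<union> Q) = span (A \<union> insert x S)"
  proof -
    have "span (P \<union> Q) = span (span (A \<union> span {x}) \<union> span (A \<union> S))" unfolding P_def Q_def ..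
    also have "\<dots> = span ((A \<union> span {x}) \<union> (A \<union> S))"
      by (metis span_Un_span sup_commute)
    also have "\<dots> = span (A \<union> insert x S)"
      by (metis Un_assoc Un_insert_right span_Un_span sup_bot.right_neutral sup_commute sup_left_idem insert_is_Un)
    finally show ?thesis .
  qed
  moreover have "\<rho> A \<le> \<rho> (span (A \<union> insert x S))"
    using r_mono[OF sA] span_superset by (meson Un_subset_iff subspace_span)
  ultimately show ?case using rP by simp
qed


lemma indep_sub: "subspace V \<Longrightarrow> \<rho> V = dim V \<Longrightarrow> subspace W \<Longrightarrow> W \<subseteq> V \<Longrightarrow> \<rho> W = dim W"
  using L[of W V] r_dim[of W] by simp

lemma rank_indep:
  assumes sV: "subspace V"
  shows "\<exists>I. subspace I \<and> I \<subseteq> V \<and> \<rho> I = dim I \<and> dim I = \<rho> V"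
proof -
  define P where "P I \<longleftrightarrow> subspace I \<and> I \<subseteq> V \<and> \<rho> I = dim I" for I
  have "P {0}" unfolding P_def using r_dim[of "{0}"] subspace_0[OF sV] by simp
  moreover have "\<forall>I. P I \<longrightarrow> dim I < dim V + 1" unfolding P_def using dim_subset by (simp add: le_imp_less_Suc)
  ultimately obtain I where PI: "P I" and Imax: "\<forall>J. P J \<longrightarrow> dim J \<le> dim I"
    using ex_has_greatest_nat[of P "{0}" dim] by blast
  have sI: "subspace I" and IV: "I \<subseteq> V" and rI: "\<rho> I = dim I" using PI unfolding P_def by auto
  have step: "\<rho> (span (I \<union> span {x})) = \<rho> I" if x: "x \<in> V" for x
  proof (cases "x \<in> I")
    case True
    have "span (I \<union> span {x}) = I"
      by (metis True sI Un_absorb2 empty_subsetI insert_subset span_eq_iff span_minimal)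
    thus ?thesis by simp
  next
    case False
    define J where "J = span (I \<union> span {x})"
    have sJ: "subspace J" unfolding J_def by simp
    have JV: "J \<subseteq> V" unfolding J_def using sV IV x
      by (metis Un_least empty_subsetI insert_subset span_minimal)
    have dJ: "dim J = dim I + 1" unfolding J_def using dim_add1 sI False by simp
    have "\<not> P J" using Imax dJ by fastforce
    hence "\<rho> J \<noteq> dim J" unfolding P_def using sJ JV by simp
    moreover have "\<rho> J \<le> dim J" using r_dim sJ by simp
    moreover have "\<rho> I \<le> \<rho> J" using r_mono[OF sI sJ] unfolding J_def using span_superset by blast
    ultimately show ?thesis unfolding J_def[symmetric] using dJ rI by simp
  qed
  obtain B where B: "finite B" "B \<subseteq> V" "span B = V" using basis_subspace_exists[OF sV] by metis
  have "\<rho> (span (I \<union> B)) = \<rho> I" using closure_fin[OF sI B(1)] step B(2) by blast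
  moreover have "span (I \<union> B) = V"
  proof
    show "span (I \<union> B) \<subseteq> V" using IV B(2) sV by (simp add: span_minimal)
    show "V \<subseteq> span (I \<union> B)" using B(3) span_mono[of B "I \<union> B"] by blast
  qed
  ultimately show ?thesis using sI IV rI by auto
qed

lemma dep_cf:
  assumes sV: "subspace V" and dep: "\<rho> V \<noteq> dim V"
  shows "\<exists>Z. q_flat scale \<rho> Z \<and> q_cyclic scale \<rho> Z \<and> dim (V \<inter> Z) > \<rho> Z"
proof -
  define f where "f W = int (dim (V \<inter> W)) - int (\<rho> W)" for W
  define S where "S = f ` {W. subspace W}"
  have "S \<subseteq> {- int dimension .. int dimension}"
  proof
    fix s assume "s \<in> S"
    then obtain W where W: "subspace W" "s = f W" unfolding S_def by auto
    have "dim (V \<inter> W) \<le> dimension" by (rule dim_subset_UNIV)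
    moreover have "\<rho> W \<le> dimension" using r_dim[OF W(1)] dim_subset_UNIV[of W] by simp
    ultimately show "s \<in> {- int dimension .. int dimension}" using W(2) unfolding f_def by simp
  qed
  hence finS: "finite S" using finite_subset by blast
  have VS: "f V \<in> S" unfolding S_def using sV by simp
  define m where "m = Max S"
  have fle: "f W \<le> m" if "subspace W" for W
    unfolding m_def using finS that by (simp add: S_def)
  have "m \<in> S" unfolding m_def using finS VS Max_in by blast
  then obtain Wm where Wm: "subspace Wm" "f Wm = m" unfolding S_def by auto
  have mpos: "m > 0"
  proof -
    have "f V > 0" unfolding f_def using r_dim[OF sV] dep by simp
    thus ?thesis using fle[OF sV] by simp
  qed
  obtain W0 where W0: "subspace W0" "f W0 = m"
    and W0min: "\<forall>W. subspace W \<and> f W = m \<longrightarrow> dim W0 \<le> dim W"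
    using ex_has_least_nat[of "\<lambda>W. subspace W \<and> f W = m" Wm dim] Wm by blast
  define Q where "Q W \<longleftrightarrow> subspace W \<and> W0 \<subseteq> W \<and> \<rho> W = \<rho> W0" for W
  have "Q W0" unfolding Q_def using W0 by simp
  moreover have "\<forall>W. Q W \<longrightarrow> dim W < dimension + 1" using dim_subset_UNIV by (simp add: le_imp_less_Suc)
  ultimately obtain W1 where QW1: "Q W1" and W1max: "\<forall>W. Q W \<longrightarrow> dim W \<le> dim W1"
    using ex_has_greatest_nat[of Q W0 dim] by blast
  have sW1: "subspace W1" and W01: "W0 \<subseteq> W1" and rW1: "\<rho> W1 = \<rho> W0" using QW1 unfolding Q_def by auto
  have fW1: "f W1 = m"
  proof -
    have "dim (V \<inter> W0) \<le> dim (V \<inter> W1)" using W01 dim_subset by (meson Int_mono order_refl)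
    hence "f W0 \<le> f W1" unfolding f_def using rW1 by simp
    thus ?thesis using fle[OF sW1] W0 by simp
  qed
  have flat: "q_flat scale \<rho> W1"
    unfolding q_flat_def
  proof (intro conjI allI impI)
    show "subspace W1" by fact
    fix x assume x: "x \<notin> W1"
    define W' where "W' = span (W1 \<union> span {x})"
    have sW': "subspace W'" unfolding W'_def by simp
    have sub: "W1 \<subseteq> W'" unfolding W'_def using span_superset by blast
    have dW': "dim W' = dim W1 + 1" unfolding W'_def using dim_add1 sW1 x by simp
    show "\<rho> W1 < \<rho> (span (W1 \<union> span {x}))"
    proof (rule ccontr)
      assume "\<not> ?thesis"
      hence "\<rho> W' = \<rho> W0" using r_mono[OF sW1 sW' sub] rW1 unfolding W'_def by simp
      hence "Q W'" unfolding Q_def using sW' sub W01 by auto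
      thus False using W1max dW' by fastforce
    qed
  qed
  have cyc: "q_cyclic scale \<rho> W1"
    unfolding q_cyclic_def q_cyc_def
  proof (rule set_eqI, rule iffI)
    fix x assume "x \<in> {x \<in> W1. \<forall>W. subspace W \<and> W \<subseteq> W1 \<and> span (W \<union> span {x}) = W1 \<longrightarrow> \<rho> W = \<rho> W1}"
    thus "x \<in> W1" by simp
  next
    fix x assume xW1: "x \<in> W1"
    have "\<rho> U = \<rho> W1" if sU: "subspace U" and UW1: "U \<subseteq> W1" and eq: "span (U \<union> span {x}) = W1" for U
    proof (cases "x \<in> U")
      case True
      have "span (U \<union> span {x}) = U"
        by (metis True sU Un_absorb2 empty_subsetI insert_subset span_eq_iff span_minimal)
      thus ?thesis using eq by simp
    next
      case False
      have dW1: "dim W1 = dim U + 1" using dim_add1[OF sU False] eq by simp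
      have r1: "\<rho> W1 \<le> \<rho> U + 1" using unit[OF sU, of x] eq by simp
      have r2: "\<rho> U \<le> \<rho> W1" using r_mono[OF sU sW1 UW1] .
      show ?thesis
      proof (rule ccontr)
        assume ne: "\<rho> U \<noteq> \<rho> W1"
        hence rU: "\<rho> W1 = \<rho> U + 1" using r1 r2 by simp
        have sVW1: "subspace (V \<inter> W1)" using sV sW1 subspace_inter by blast
        have "dim (span ((V \<inter> W1) \<union> U)) + dim ((V \<inter> W1) \<inter> U) = dim (V \<inter> W1) + dim U"
          using dim_sum[OF sVW1 sU] .
        moreover have "dim (span ((V \<inter> W1) \<union> U)) \<le> dim W1"
          using dim_subset[of "span ((V \<inter> W1) \<union> U)" W1] span_minimal[of "(V \<inter> W1) \<union> U" W1] sW1 UW1 by blast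
        moreover have "(V \<inter> W1) \<inter> U = V \<inter> U" using UW1 by blast
        ultimately have "dim (V \<inter> W1) \<le> dim (V \<inter> U) + 1" using dW1 by simp
        hence fU: "f U = m" using fW1 fle[OF sU] rU unfolding f_def by simp
        define X where "X = span (U \<union> W0)"
        define Y where "Y = U \<inter> W0"
        have sX: "subspace X" unfolding X_def by simp
        have sY: "subspace Y" unfolding Y_def using sU W0(1) subspace_inter by blast
        have rsub: "\<rho> X + \<rho> Y \<le> \<rho> U + \<rho> W0" unfolding X_def Y_def using r_sub[OF sU W0(1)] .
        have sVU: "subspace (V \<inter> U)" and sVW0: "subspace (V \<inter> W0)" using sV sU W0(1) subspace_inter by blast+
        have ds: "dim (span ((V \<inter> U) \<union> (V \<inter> W0))) + dim ((V \<inter> U) \<inter> (V \<inter> W0)) = dim (V \<inter> U) + dim (V \<inter> W0)"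
          using dim_sum[OF sVU sVW0] .
        have "span ((V \<inter> U) \<union> (V \<inter> W0)) \<subseteq> V \<inter> X"
        proof (rule span_minimal)
          show "V \<inter> U \<union> V \<inter> W0 \<subseteq> V \<inter> X" unfolding X_def using span_superset by blast
          show "subspace (V \<inter> X)" using sV sX subspace_inter by blast
        qed
        hence "dim (span ((V \<inter> U) \<union> (V \<inter> W0))) \<le> dim (V \<inter> X)" by (rule dim_subset)
        moreover have "(V \<inter> U) \<inter> (V \<inter> W0) = V \<inter> Y" unfolding Y_def by blast
        ultimately have "dim (V \<inter> U) + dim (V \<inter> W0) \<le> dim (V \<inter> X) + dim (V \<inter> Y)" using ds by simp
        hence "f U + f W0 \<le> f X + f Y" unfolding f_def using rsub by simp
        hence fY: "f Y = m" using fle[OF sX] fle[OF sY] fU W0(2) by simp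
        hence "dim W0 \<le> dim Y" using W0min sY by blast
        hence "Y = W0" using subspace_dim_equal[OF sY W0(1)] unfolding Y_def by blast
        hence "W0 \<subseteq> U" unfolding Y_def by blast
        hence "\<rho> W0 \<le> \<rho> U" using r_mono[OF W0(1) sU] by simp
        thus False using rU rW1 by simp
      qed
    qed
    thus "x \<in> {x \<in> W1. \<forall>W. subspace W \<and> W \<subseteq> W1 \<and> span (W \<union> span {x}) = W1 \<longrightarrow> \<rho> W = \<rho> W1}"
      using xW1 by blast
  qed
  have "dim (V \<inter> W1) > \<rho> W1" using fW1 mpos unfolding f_def by simp
  thus ?thesis using flat cyc by blast
qed

lemma part1:
  assumes sV: "subspace V"
  shows "\<rho> V = dim V \<longleftrightarrow> (\<forall>Z\<in>cyclic_flats scale \<rho>. dim (V \<inter> Z) \<le> \<rho> Z)"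
proof
  assume ind: "\<rho> V = dim V"
  show "\<forall>Z\<in>cyclic_flats scale \<rho>. dim (V \<inter> Z) \<le> \<rho> Z"
  proof
    fix Z assume "Z \<in> cyclic_flats scale \<rho>"
    hence sZ: "subspace Z" unfolding cyclic_flats_def q_flat_def by simp
    have sVZ: "subspace (V \<inter> Z)" using sV sZ subspace_inter by blast
    have "\<rho> (V \<inter> Z) = dim (V \<inter> Z)" using indep_sub[OF sV ind sVZ] by blast
    moreover have "\<rho> (V \<inter> Z) \<le> \<rho> Z" using r_mono[OF sVZ sZ] by blast
    ultimately show "dim (V \<inter> Z) \<le> \<rho> Z" by simp
  qed
next
  assume H: "\<forall>Z\<in>cyclic_flats scale \<rho>. dim (V \<inter> Z) \<le> \<rho> Z"
  show "\<rho> V = dim V"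
  proof (rule ccontr)
    assume "\<rho> V \<noteq> dim V"
    from dep_cf[OF sV this] obtain Z where "q_flat scale \<rho> Z" "q_cyclic scale \<rho> Z" "dim (V \<inter> Z) > \<rho> Z" by blast
    thus False using H unfolding cyclic_flats_def by fastforce
  qed
qed

end

lemma qm_interp:
  assumes "q_matroid scale \<rho>" "finite_dimensional_vector_space scale B"
  shows "qmat scale B \<rho>"
proof -
  interpret finite_dimensional_vector_space scale B by fact
  show ?thesis
    by (unfold_locales) (use assms(1) in \<open>auto simp: q_matroid_def\<close>)
qed

theorem theorem4p5:
  fixes scale :: "'f::{finite,field} \<Rightarrow> 'v::ab_group_add \<Rightarrow> 'v"
    and \<rho> :: "'v set \<Rightarrow> nat"
  assumes "q_matroid scale \<rho>"
  shows "(\<forall>V. module.subspace scale V \<longrightarrow>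
            (q_indep scale \<rho> V \<longleftrightarrow>
              (\<forall>Z\<in>cyclic_flats scale \<rho>. vector_space.dim scale (V \<inter> Z) \<le> \<rho> Z)))
     \<and> (\<forall>\<rho>'. q_matroid scale \<rho>' \<and> cyclic_flats scale \<rho>' = cyclic_flats scale \<rho>
              \<and> (\<forall>Z\<in>cyclic_flats scale \<rho>. \<rho>' Z = \<rho> Z) \<longrightarrow>
            (\<forall>V. module.subspace scale V \<longrightarrow> (q_indep scale \<rho>' V \<longleftrightarrow> q_indep scale \<rho> V))
            \<and> (\<forall>V. module.subspace scale V \<longrightarrow> \<rho>' V = \<rho> V))"
proof -
  obtain B where fd: "finite_dimensional_vector_space scale B" using assms unfolding q_matroid_def by blast
  interpret A: qmat scale B \<rho> using qm_interp[OF assms fd] .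
  have P1: "\<forall>V. module.subspace scale V \<longrightarrow>
            (q_indep scale \<rho> V \<longleftrightarrow>
              (\<forall>Z\<in>cyclic_flats scale \<rho>. vector_space.dim scale (V \<inter> Z) \<le> \<rho> Z))"
    unfolding q_indep_def using A.part1 by blast
  have P2: "(\<forall>V. module.subspace scale V \<longrightarrow> (q_indep scale \<rho>' V \<longleftrightarrow> q_indep scale \<rho> V))
            \<and> (\<forall>V. module.subspace scale V \<longrightarrow> \<rho>' V = \<rho> V)"
    if H: "q_matroid scale \<rho>'" "cyclic_flats scale \<rho>' = cyclic_flats scale \<rho>"
              "\<forall>Z\<in>cyclic_flats scale \<rho>. \<rho>' Z = \<rho> Z" for \<rho>'
  proof -
    interpret A': qmat scale B \<rho>' using qm_interp[OF H(1) fd] .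
    have I: "q_indep scale \<rho>' V \<longleftrightarrow> q_indep scale \<rho> V" if sV: "module.subspace scale V" for V
      unfolding q_indep_def using A.part1[OF sV] A'.part1[OF sV] H(2,3) by auto
    have R: "\<rho>' V = \<rho> V" if sV: "module.subspace scale V" for V
    proof (rule antisym)
      obtain I where "module.subspace scale I" "I \<subseteq> V" "\<rho> I = A.dim I" "A.dim I = \<rho> V"
        using A.rank_indep[OF sV] by blast
      moreover have "\<rho>' I = A.dim I" using I[OF calculation(1)] calculation(3) unfolding q_indep_def by simp
      ultimately show "\<rho> V \<le> \<rho>' V" using A'.r_mono[OF _ sV] by metis
    next
      obtain I where "module.subspace scale I" "I \<subseteq> V" "\<rho>' I = A.dim I" "A.dim I = \<rho>' V"
        using A'.rank_indep[OF sV] by blast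
      moreover have "\<rho> I = A.dim I" using I[OF calculation(1)] calculation(3) unfolding q_indep_def by simp
      ultimately show "\<rho>' V \<le> \<rho> V" using A.r_mono[OF _ sV] by metis
    qed
    show ?thesis using I R by blast
  qed
  show ?thesis using P1 P2 by blast
qed

end
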